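(* In a combinatorial auction as described in the context, if $(x^*,p)$ is a Walrasian equilibrium whose payments $\rho_i=p\,a^{i*}$ form a minimum-revenue core-selecting (MRC) payment vector, then $(x^*,p)$ is a price-match equilibrium.
   Context: Combinatorial auction: item types $j\in\mathcal J$ with supply $c_j\in\mathbb Z_{\ge1}$ (vector $c$); bidders $\mathcal I$; finite set of bids $\mathcal K$, bid $k$ made by bidder $i(k)$ with bundle $a^k\in\mathbb Z^J_{\ge0}$, $a^k\le c$, and amount $b_k\ge0$; $\mathcal K_i$ = bids of bidder $i$; bids taken truthful. $\bm A$ = matrix with columns $a^k$, $\bm B$ with $\bm B_{i,k}=1$ iff $k\in\mathcal K_i$. Feasible allocation: $x\in\{0,1\}^K$, $\bm Ax\le c$, $\bm Bx\le\bm 1$. $w(\mathcal C,c',\cdot)$ = maximum total bid amount over feasible allocations with supply $c'$ using only bids of bidders in $\mathcal C$. $x^*$ efficient (optimal) allocation; $a^{i*},b_{i*}$ bundle and amount of $i$'s accepted bid ($\bm 0,0$ if none). A payment vector $\rho$ ($\rho_i=0$ for non-winners) is core-selecting at $x^*$ if $\rho_i\le b_{i*}$ for all $i$ and $\sum_{i\in\mathcal C}(b_{i*}-\rho_i)+\sum_{i\in\mathcal I}\rho_i\ge w(\mathcal C,c,\mathcal K^{\mathcal C})$ for all $\mathcal C\subseteq\mathcal I$ ($\mathcal K^{\mathcal C}$ = bids of bidders in $\mathcal C$); it is MRC if it minimizes $\sum_i\rho_i$ among core-selecting payment vectors. A Walrasian equilibrium (WE) is $(x^*,p)$, $p\in\mathbb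 R^J_{\ge0}$, with $s_i=b_{i*}-p\,a^{i*}\ge0$, $p\,a^k+s_{i(k)}\ge b_k$ for all bids $k$, and $p_j=0$ whenever $(\bm Ax^* )_j<c_j$. A WE is a price-match equilibrium (PME) if for every bidder $i$ there is a feasible allocation $x^{-i}$ with $x^{-i}_k=0$ for $k\in\mathcal K_i$, $p\,a^k\le b_k$ whenever $x^{-i}_k=1$, and $p\bm Ax^{-i}=p\bm Ax^*$. (Items may include artificial items, i.e. valid cuts added as rows of $\bm A$.) *)

theory Defs
  imports Complex_Main
begin

text \<open>An allocation x in {0,1}^K is represented by the
  set S of accepted bids (x_k = 1 iff k in S).\<close>

definition auction ::
  "'j set \<Rightarrow> 'i set \<Rightarrow> 'k set \<Rightarrow> ('k \<Rightarrow> 'i) \<Rightarrow> ('k \<Rightarrow> 'j \<Rightarrow> nat) \<Rightarrow> ('k \<Rightarrow> real)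
    \<Rightarrow> ('j \<Rightarrow> nat) \<Rightarrow> bool" where
  "auction J I K bidder a b c \<longleftrightarrow>
     finite J \<and> finite I \<and> finite K \<and>
     (\<forall>j\<in>J. c j \<ge> 1) \<and>
     (\<forall>k\<in>K. bidder k \<in> I \<and> b k \<ge> 0 \<and> (\<forall>j\<in>J. a k j \<le> c j))"

definition usage :: "('k \<Rightarrow> 'j \<Rightarrow> nat) \<Rightarrow> 'k set \<Rightarrow> 'j \<Rightarrow> nat" where
  "usage a S j = (\<Sum>k\<in>S. a k j)"

definition feasible ::
  "'j set \<Rightarrow> 'k set \<Rightarrow> ('k \<Rightarrow> 'i) \<Rightarrow> ('k \<Rightarrow> 'j \<Rightarrow> nat) \<Rightarrow> ('j \<Rightarrow> nat) \<Rightarrow> 'k set \<Rightarrow> bool" where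
  "feasible J K bidder a c' S \<longleftrightarrow>
     S \<subseteq> K \<and> (\<forall>j\<in>J. usage a S j \<le> c' j) \<and>
     (\<forall>i. card {k\<in>S. bidder k = i} \<le> 1)"

definition total_bid :: "('k \<Rightarrow> real) \<Rightarrow> 'k set \<Rightarrow> real" where
  "total_bid b S = (\<Sum>k\<in>S. b k)"

definition w ::
  "'j set \<Rightarrow> 'k set \<Rightarrow> ('k \<Rightarrow> 'i) \<Rightarrow> ('k \<Rightarrow> 'j \<Rightarrow> nat) \<Rightarrow> ('k \<Rightarrow> real) \<Rightarrow> ('j \<Rightarrow> nat)
    \<Rightarrow> 'i set \<Rightarrow> real" where
  "w J K bidder a b c' C =
     Max (total_bid b ` {S. feasible J K bidder a c' S \<and> (\<forall>k\<in>S. bidder k \<in> C)})"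

definition efficient ::
  "'j set \<Rightarrow> 'k set \<Rightarrow> ('k \<Rightarrow> 'i) \<Rightarrow> ('k \<Rightarrow> 'j \<Rightarrow> nat) \<Rightarrow> ('k \<Rightarrow> real) \<Rightarrow> ('j \<Rightarrow> nat)
    \<Rightarrow> 'k set \<Rightarrow> bool" where
  "efficient J K bidder a b c X \<longleftrightarrow>
     feasible J K bidder a c X \<and>
     (\<forall>S. feasible J K bidder a c S \<longrightarrow> total_bid b S \<le> total_bid b X)"

text \<open>Bundle a^{i*} and amount b_{i*} of i's accepted bid in X (0 if none;
  feasibility guarantees at most one accepted bid per bidder).\<close>
definition abun :: "('k \<Rightarrow> 'i) \<Rightarrow> ('k \<Rightarrow> 'j \<Rightarrow> nat) \<Rightarrow> 'k set \<Rightarrow> 'i \<Rightarrow> 'j \<Rightarrow> nat" where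
  "abun bidder a X i j = (\<Sum>k\<in>{k\<in>X. bidder k = i}. a k j)"

definition bamt :: "('k \<Rightarrow> 'i) \<Rightarrow> ('k \<Rightarrow> real) \<Rightarrow> 'k set \<Rightarrow> 'i \<Rightarrow> real" where
  "bamt bidder b X i = (\<Sum>k\<in>{k\<in>X. bidder k = i}. b k)"

definition winner :: "('k \<Rightarrow> 'i) \<Rightarrow> 'k set \<Rightarrow> 'i \<Rightarrow> bool" where
  "winner bidder X i \<longleftrightarrow> (\<exists>k\<in>X. bidder k = i)"

definition pdot :: "'j set \<Rightarrow> ('j \<Rightarrow> real) \<Rightarrow> ('j \<Rightarrow> nat) \<Rightarrow> real" where
  "pdot J p v = (\<Sum>j\<in>J. p j * real (v j))"

definition core_selecting ::
  "'j set \<Rightarrow> 'i set \<Rightarrow> 'k set \<Rightarrow> ('k \<Rightarrow> 'i) \<Rightarrow> ('k \<Rightarrow> 'j \<Rightarrow> nat) \<Rightarrow> ('k \<Rightarrow> real)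
    \<Rightarrow> ('j \<Rightarrow> nat) \<Rightarrow> 'k set \<Rightarrow> ('i \<Rightarrow> real) \<Rightarrow> bool" where
  "core_selecting J I K bidder a b c X \<rho> \<longleftrightarrow>
     (\<forall>i\<in>I. \<not> winner bidder X i \<longrightarrow> \<rho> i = 0) \<and>
     (\<forall>i\<in>I. \<rho> i \<le> bamt bidder b X i) \<and>
     (\<forall>C\<subseteq>I. (\<Sum>i\<in>C. bamt bidder b X i - \<rho> i) + (\<Sum>i\<in>I. \<rho> i)
               \<ge> w J K bidder a b c C)"

definition MRC ::
  "'j set \<Rightarrow> 'i set \<Rightarrow> 'k set \<Rightarrow> ('k \<Rightarrow> 'i) \<Rightarrow> ('k \<Rightarrow> 'j \<Rightarrow> nat) \<Rightarrow> ('k \<Rightarrow> real)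
    \<Rightarrow> ('j \<Rightarrow> nat) \<Rightarrow> 'k set \<Rightarrow> ('i \<Rightarrow> real) \<Rightarrow> bool" where
  "MRC J I K bidder a b c X \<rho> \<longleftrightarrow>
     core_selecting J I K bidder a b c X \<rho> \<and>
     (\<forall>\<rho>'. core_selecting J I K bidder a b c X \<rho>' \<longrightarrow> (\<Sum>i\<in>I. \<rho> i) \<le> (\<Sum>i\<in>I. \<rho>' i))"

definition walrasian ::
  "'j set \<Rightarrow> 'i set \<Rightarrow> 'k set \<Rightarrow> ('k \<Rightarrow> 'i) \<Rightarrow> ('k \<Rightarrow> 'j \<Rightarrow> nat) \<Rightarrow> ('k \<Rightarrow> real)
    \<Rightarrow> ('j \<Rightarrow> nat) \<Rightarrow> 'k set \<Rightarrow> ('j \<Rightarrow> real) \<Rightarrow> bool" where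
  "walrasian J I K bidder a b c X p \<longleftrightarrow>
     feasible J K bidder a c X \<and>
     (\<forall>j\<in>J. p j \<ge> 0) \<and>
     (\<forall>i\<in>I. bamt bidder b X i - pdot J p (abun bidder a X i) \<ge> 0) \<and>
     (\<forall>k\<in>K. pdot J p (a k) + (bamt bidder b X (bidder k) - pdot J p (abun bidder a X (bidder k)))
               \<ge> b k) \<and>
     (\<forall>j\<in>J. usage a X j < c j \<longrightarrow> p j = 0)"

definition price_match ::
  "'j set \<Rightarrow> 'i set \<Rightarrow> 'k set \<Rightarrow> ('k \<Rightarrow> 'i) \<Rightarrow> ('k \<Rightarrow> 'j \<Rightarrow> nat) \<Rightarrow> ('k \<Rightarrow> real)
    \<Rightarrow> ('j \<Rightarrow> nat) \<Rightarrow> 'k set \<Rightarrow> ('j \<Rightarrow> real) \<Rightarrow> bool" where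
  "price_match J I K bidder a b c X p \<longleftrightarrow>
     walrasian J I K bidder a b c X p \<and>
     (\<forall>i\<in>I. \<exists>Y. feasible J K bidder a c Y \<and> (\<forall>k\<in>Y. bidder k \<noteq> i) \<and>
                 (\<forall>k\<in>Y. pdot J p (a k) \<le> b k) \<and>
                 pdot J p (usage a Y) = pdot J p (usage a X))"

end

theory Submission
  imports Defs
begin

lemma pdot_usage:
  assumes "finite J" "finite Y"
  shows "pdot J p (usage a Y) = (\<Sum>k\<in>Y. pdot J p (a k))"
  unfolding pdot_def usage_def
  by (simp add: sum_distrib_left sum.swap[of _ J Y])

lemma single_bid:
  assumes "feasible J K bidder a c X" "finite X" "k \<in> X"
  shows "{k'\<in>X. bidder k' = bidder k} = {k}"
proof -
  have "card {k'\<in>X. bidder k' = bidder k} \<le> Suc 0"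
    using assms(1) unfolding feasible_def by auto
  moreover have "finite {k'\<in>X. bidder k' = bidder k}" using assms(2) by auto
  ultimately have "\<forall>x\<in>{k'\<in>X. bidder k' = bidder k}. \<forall>y\<in>{k'\<in>X. bidder k' = bidder k}. x = y"
    using card_le_Suc0_iff_eq by blast
  then show ?thesis using assms(3) by blast
qed

lemma feas_inj:
  assumes "feasible J K bidder a c Y" "finite Y"
  shows "inj_on bidder Y"
proof (rule inj_onI)
  fix x y assume "x \<in> Y" "y \<in> Y" "bidder x = bidder y"
  then have "y \<in> {k'\<in>Y. bidder k' = bidder x}" by auto
  then show "x = y" using single_bid[OF assms \<open>x \<in> Y\<close>] by auto
qed

lemma w_attained:
  assumes "finite K"
  shows "\<exists>Y. feasible J K bidder a c Y \<and> (\<forall>k\<in>Y. bidder k \<in> C) \<and>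
             total_bid b Y = w J K bidder a b c C"
proof -
  let ?S = "{S. feasible J K bidder a c S \<and> (\<forall>k\<in>S. bidder k \<in> C)}"
  have "?S \<subseteq> Pow K" unfolding feasible_def by auto
  then have "finite (total_bid b ` ?S)" using assms by (meson finite_Pow_iff finite_imageI finite_subset)
  moreover have "{} \<in> ?S" unfolding feasible_def usage_def by auto
  ultimately have "Max (total_bid b ` ?S) \<in> total_bid b ` ?S" by (intro Max_in) auto
  then show ?thesis unfolding w_def by auto
qed

theorem corollary1:
  fixes J :: "'j set" and I :: "'i set" and K :: "'k set"
    and bidder :: "'k \<Rightarrow> 'i" and a :: "'k \<Rightarrow> 'j \<Rightarrow> nat" and b :: "'k \<Rightarrow> real"
    and c :: "'j \<Rightarrow> nat" and X :: "'k set" and p :: "'j \<Rightarrow> real"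
  assumes "auction J I K bidder a b c"
    and "efficient J K bidder a b c X"
    and "walrasian J I K bidder a b c X p"
    and "MRC J I K bidder a b c X (\<lambda>i. pdot J p (abun bidder a X i))"
  shows "price_match J I K bidder a b c X p"
proof -
  have finJ: "finite J" and finI: "finite I" and finK: "finite K"
    and bI: "\<forall>k\<in>K. bidder k \<in> I"
    using assms(1) unfolding auction_def by auto
  have feasX: "feasible J K bidder a c X" using assms(3) unfolding walrasian_def by auto
  then have XK: "X \<subseteq> K" unfolding feasible_def by auto
  then have finX: "finite X" using finK finite_subset by auto
  define \<rho> where "\<rho> = (\<lambda>i. pdot J p (abun bidder a X i))"
  define s where "s = (\<lambda>i. bamt bidder b X i - \<rho> i)"
  have s_nn: "\<forall>i\<in>I. s i \<ge> 0" using assms(3) unfolding walrasian_def s_def \<rho>_def by auto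
  have WEk: "\<forall>k\<in>K. pdot J p (a k) + s (bidder k) \<ge> b k"
    using assms(3) unfolding walrasian_def s_def \<rho>_def by auto
  have p_nn: "\<forall>j\<in>J. p j \<ge> 0" and p_zero: "\<forall>j\<in>J. usage a X j < c j \<longrightarrow> p j = 0"
    using assms(3) unfolding walrasian_def by auto
  have uX: "\<forall>j\<in>J. usage a X j \<le> c j" using feasX unfolding feasible_def by auto
  have sum\<rho>: "(\<Sum>i\<in>I. \<rho> i) = pdot J p (usage a X)"
  proof -
    have "(\<Sum>i\<in>I. \<rho> i) = (\<Sum>i\<in>I. \<Sum>k\<in>{k\<in>X. bidder k = i}. pdot J p (a k))"
      unfolding \<rho>_def abun_def
      by (rule sum.cong[OF refl], rule pdot_usage[OF finJ, of _ p a, unfolded usage_def]) (use finX in auto)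
    also have "\<dots> = (\<Sum>k\<in>X. pdot J p (a k))"
      by (rule sum.group[OF finX finI]) (use XK bI in auto)
    also have "\<dots> = pdot J p (usage a X)" using pdot_usage[OF finJ finX] by simp
    finally show ?thesis .
  qed
  have key: "\<exists>Y. feasible J K bidder a c Y \<and> (\<forall>k\<in>Y. bidder k \<in> C) \<and>
                 (\<forall>k\<in>Y. pdot J p (a k) \<le> b k) \<and>
                 pdot J p (usage a Y) = pdot J p (usage a X)"
    if CI: "C \<subseteq> I" and tight: "w J K bidder a b c C \<ge> (\<Sum>i\<in>C. s i) + (\<Sum>i\<in>I. \<rho> i)" for C
  proof -
    obtain Y where Yf: "feasible J K bidder a c Y" and YC: "\<forall>k\<in>Y. bidder k \<in> C"
      and Yw: "total_bid b Y = w J K bidder a b c C"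
      using w_attained[OF finK] by blast
    have YK: "Y \<subseteq> K" using Yf unfolding feasible_def by auto
    then have finY: "finite Y" using finK finite_subset by auto
    have finC: "finite C" using CI finI finite_subset by auto
    have inj: "inj_on bidder Y" using feas_inj[OF Yf finY] .
    have h1: "\<forall>k\<in>Y. b k \<le> pdot J p (a k) + s (bidder k)" using WEk YK by auto
    have h2: "(\<Sum>k\<in>Y. s (bidder k)) \<le> (\<Sum>i\<in>C. s i)"
    proof -
      have "(\<Sum>k\<in>Y. s (bidder k)) = (\<Sum>i\<in>bidder ` Y. s i)"
        using sum.reindex[OF inj, of s] by simp
      also have "\<dots> \<le> (\<Sum>i\<in>C. s i)"
        by (rule sum_mono2[OF finC]) (use YC s_nn CI in auto)
      finally show ?thesis .
    qed
    have h3: "(\<Sum>k\<in>Y. pdot J p (a k)) = pdot J p (usage a Y)" using pdot_usage[OF finJ finY] by simp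
    have h4: "pdot J p (usage a Y) \<le> pdot J p (usage a X)"
      unfolding pdot_def
    proof (rule sum_mono)
      fix j assume j: "j \<in> J"
      have uY: "usage a Y j \<le> c j" using Yf j unfolding feasible_def by auto
      show "p j * real (usage a Y j) \<le> p j * real (usage a X j)"
      proof (cases "usage a X j < c j")
        case True then show ?thesis using p_zero j by auto
      next
        case False then have "usage a X j = c j" using uX j by auto
        then show ?thesis using uY p_nn j by (simp add: mult_left_mono)
      qed
    qed
    have sumY: "(\<Sum>k\<in>Y. b k) \<le> (\<Sum>k\<in>Y. pdot J p (a k) + s (bidder k))"
      using h1 by (intro sum_mono) auto
    have dist: "(\<Sum>k\<in>Y. pdot J p (a k) + s (bidder k)) = (\<Sum>k\<in>Y. pdot J p (a k)) + (\<Sum>k\<in>Y. s (bidder k))"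
      by (rule sum.distrib)
    have tb: "total_bid b Y = (\<Sum>k\<in>Y. b k)" unfolding total_bid_def ..
    have eqp: "pdot J p (usage a Y) = pdot J p (usage a X)"
      using sumY dist h2 h3 h4 tb Yw tight sum\<rho> by linarith
    have eqs: "(\<Sum>k\<in>Y. b k) = (\<Sum>k\<in>Y. pdot J p (a k) + s (bidder k))"
      using sumY dist h2 h3 h4 tb Yw tight sum\<rho> by linarith
    have each: "\<forall>k\<in>Y. pdot J p (a k) \<le> b k"
    proof (rule ccontr)
      assume "\<not> (\<forall>k\<in>Y. pdot J p (a k) \<le> b k)"
      then obtain k where k: "k \<in> Y" "pdot J p (a k) > b k" by auto
      have "s (bidder k) \<ge> 0" using s_nn bI YK k by auto
      then have "b k < pdot J p (a k) + s (bidder k)" using k by auto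
      then have "(\<Sum>k\<in>Y. b k) < (\<Sum>k\<in>Y. pdot J p (a k) + s (bidder k))"
        using sum_strict_mono_ex1[OF finY, of b "\<lambda>k. pdot J p (a k) + s (bidder k)"] h1 k by auto
      then show False using eqs by simp
    qed
    show ?thesis using Yf YC each eqp by blast
  qed
  have core\<rho>: "core_selecting J I K bidder a b c X \<rho>"
    using assms(4) unfolding MRC_def \<rho>_def by auto
  have min\<rho>: "\<And>\<rho>'. core_selecting J I K bidder a b c X \<rho>' \<Longrightarrow> (\<Sum>i\<in>I. \<rho> i) \<le> (\<Sum>i\<in>I. \<rho>' i)"
    using assms(4) unfolding MRC_def \<rho>_def by auto
  have "\<exists>Y. feasible J K bidder a c Y \<and> (\<forall>k\<in>Y. bidder k \<noteq> i) \<and>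
                 (\<forall>k\<in>Y. pdot J p (a k) \<le> b k) \<and>
                 pdot J p (usage a Y) = pdot J p (usage a X)" if iI: "i \<in> I" for i
  proof (cases "winner bidder X i")
    case False
    have "\<forall>k\<in>X. pdot J p (a k) \<le> b k"
    proof
      fix k assume k: "k \<in> X"
      have sb: "{k'\<in>X. bidder k' = bidder k} = {k}" using single_bid[OF feasX finX k] .
      have "bamt bidder b X (bidder k) = b k" unfolding bamt_def sb by simp
      moreover have "abun bidder a X (bidder k) = a k" unfolding abun_def sb by auto
      ultimately have "s (bidder k) = b k - pdot J p (a k)" unfolding s_def \<rho>_def by simp
      moreover have "s (bidder k) \<ge> 0" using s_nn bI XK k by auto
      ultimately show "pdot J p (a k) \<le> b k" by simp
    qed
    moreover have "\<forall>k\<in>X. bidder k \<noteq> i" using False unfolding winner_def by auto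
    ultimately show ?thesis using feasX by blast
  next
    case True
    show ?thesis
    proof (rule ccontr)
      assume noY: "\<not> ?thesis"
      have strict: "w J K bidder a b c C < (\<Sum>i\<in>C. s i) + (\<Sum>i\<in>I. \<rho> i)"
        if CI0: "C \<subseteq> I" and iC0: "i \<notin> C" for C
      proof (rule ccontr)
        assume "\<not> ?thesis"
        then obtain Y where "feasible J K bidder a c Y \<and> (\<forall>k\<in>Y. bidder k \<in> C) \<and>
                 (\<forall>k\<in>Y. pdot J p (a k) \<le> b k) \<and>
                 pdot J p (usage a Y) = pdot J p (usage a X)"
          using key[OF CI0] by force
        then show False using noY iC0 by metis
      qed
      define SL where "SL = (\<lambda>C. (\<Sum>i\<in>C. s i) + (\<Sum>i\<in>I. \<rho> i) - w J K bidder a b c C) ` {C. C \<subseteq> I \<and> i \<notin> C}"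
      have finSL: "finite SL" unfolding SL_def using finI by auto
      have neSL: "SL \<noteq> {}" unfolding SL_def by auto
      define \<epsilon> where "\<epsilon> = Min SL"
      have eps_pos: "\<epsilon> > 0" unfolding \<epsilon>_def
        using finSL neSL strict unfolding SL_def by (subst Min_gr_iff) auto
      have eps_le: "\<epsilon> \<le> (\<Sum>i\<in>C. s i) + (\<Sum>i\<in>I. \<rho> i) - w J K bidder a b c C"
        if "C \<subseteq> I" "i \<notin> C" for C
        unfolding \<epsilon>_def using finSL that unfolding SL_def by (intro Min_le) auto
      define \<rho>' where "\<rho>' = (\<lambda>j. \<rho> j - (if j = i then \<epsilon> else 0))"
      have sumI: "(\<Sum>j\<in>I. \<rho>' j) = (\<Sum>j\<in>I. \<rho> j) - \<epsilon>"
        unfolding \<rho>'_def using finI iI by (simp add: sum_subtractf)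
      have sumC: "(\<Sum>j\<in>C. bamt bidder b X j - \<rho>' j) = (\<Sum>j\<in>C. s j) + (if i \<in> C then \<epsilon> else 0)"
        if "C \<subseteq> I" for C
      proof -
        have finC: "finite C" using that finI finite_subset by auto
        have "(\<Sum>j\<in>C. bamt bidder b X j - \<rho>' j) = (\<Sum>j\<in>C. s j + (if j = i then \<epsilon> else 0))"
          unfolding \<rho>'_def s_def by (rule sum.cong) auto
        also have "\<dots> = (\<Sum>j\<in>C. s j) + (if i \<in> C then \<epsilon> else 0)"
          using finC by (simp add: sum.distrib)
        finally show ?thesis .
      qed
      have "core_selecting J I K bidder a b c X \<rho>'"
        unfolding core_selecting_def
      proof (intro conjI ballI allI impI)
        fix j assume "j \<in> I" "\<not> winner bidder X j"
        then show "\<rho>' j = 0" using core\<rho> True unfolding core_selecting_def \<rho>'_def by auto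
      next
        fix j assume "j \<in> I"
        then show "\<rho>' j \<le> bamt bidder b X j"
          using core\<rho> eps_pos unfolding core_selecting_def \<rho>'_def by force
      next
        fix C assume CI: "C \<subseteq> I"
        have old: "(\<Sum>j\<in>C. s j) + (\<Sum>j\<in>I. \<rho> j) \<ge> w J K bidder a b c C"
          using core\<rho> CI unfolding core_selecting_def s_def by auto
        show "(\<Sum>j\<in>C. bamt bidder b X j - \<rho>' j) + (\<Sum>j\<in>I. \<rho>' j) \<ge> w J K bidder a b c C"
        proof (cases "i \<in> C")
          case True then show ?thesis using sumC[OF CI] sumI old by simp
        next
          case False then show ?thesis using sumC[OF CI] sumI eps_le[OF CI False] by simp
        qed
      qed
      then have "(\<Sum>j\<in>I. \<rho> j) \<le> (\<Sum>j\<in>I. \<rho>' j)" using min\<rho> by blast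
      then show False using sumI eps_pos by simp
    qed
  qed
  then show ?thesis unfolding price_match_def using assms(3) by blast
qed

end
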